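(* Let $X$ and $Y$ be finite $T_0$-spaces. (1) If $X$ and $Y$ are minimal finite spaces and $X$ is homotopy equivalent to $Y$, then $\det(X_M)=\det(Y_M)$. (2) If $X$ is homotopy equivalent to $Y$, then $|\det(X_M)|=|\det(Y_M)|$. (3) If $X$ is contractible, then $\det(X_M)=0$.
   Context: A finite $T_0$-space is identified with a finite poset via $x\le y$ iff $U_x\subseteq U_y$, where $U_x$ is the minimal open set containing $x$. For a labelling $X=\{x_1,\dots,x_n\}$, $X_M=(x_{i,j})$ is the $n\times n$ matrix with $x_{i,j}=0$ if $x_i\le x_j$ and $x_{i,j}=1$ otherwise; its determinant does not depend on the labelling. A point $x$ is a beat point if $\{y:y<x\}$ has a maximum or $\{y:y>x\}$ has a minimum. A minimal finite space is a finite $T_0$-space with no beat points. Homotopy equivalence and contractibility are in the usual topological sense. *)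

theory Defs
  imports "HOL-Analysis.Analysis" "Jordan_Normal_Form.Determinant"
begin

definition minimal_open :: "'a topology \<Rightarrow> 'a \<Rightarrow> 'a set" where
  "minimal_open X x = \<Inter>{U. openin X U \<and> x \<in> U}"

definition fin_le :: "'a topology \<Rightarrow> 'a \<Rightarrow> 'a \<Rightarrow> bool" where
  "fin_le X x y \<longleftrightarrow> minimal_open X x \<subseteq> minimal_open X y"

definition fin_lt :: "'a topology \<Rightarrow> 'a \<Rightarrow> 'a \<Rightarrow> bool" where
  "fin_lt X x y \<longleftrightarrow> fin_le X x y \<and> x \<noteq> y"

definition finite_T0_space :: "'a topology \<Rightarrow> bool" where
  "finite_T0_space X \<longleftrightarrow> finite (topspace X) \<and> t0_space X"

definition labelling :: "'a topology \<Rightarrow> (nat \<Rightarrow> 'a) \<Rightarrow> bool" where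
  "labelling X f \<longleftrightarrow> bij_betw f {..<card (topspace X)} (topspace X)"

definition assoc_matrix :: "'a topology \<Rightarrow> (nat \<Rightarrow> 'a) \<Rightarrow> int Matrix.mat" where
  "assoc_matrix X f = Matrix.mat (card (topspace X)) (card (topspace X))
     (\<lambda>(i, j). if fin_le X (f i) (f j) then 0 else 1)"

definition beat_point :: "'a topology \<Rightarrow> 'a \<Rightarrow> bool" where
  "beat_point X x \<longleftrightarrow> x \<in> topspace X \<and>
     ((\<exists>m \<in> topspace X. fin_lt X m x \<and> (\<forall>y \<in> topspace X. fin_lt X y x \<longrightarrow> fin_le X y m)) \<or>
      (\<exists>m \<in> topspace X. fin_lt X x m \<and> (\<forall>y \<in> topspace X. fin_lt X x y \<longrightarrow> fin_le X m y)))"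

definition minimal_finite_space :: "'a topology \<Rightarrow> bool" where
  "minimal_finite_space X \<longleftrightarrow> finite_T0_space X \<and> (\<forall>x \<in> topspace X. \<not> beat_point X x)"

end

theory Submission
  imports Defs
begin

lemma mo_open:
  assumes "finite (topspace X)" "x \<in> topspace X"
  shows "openin X (minimal_open X x)"
proof -
  have "{U. openin X U \<and> x \<in> U} \<subseteq> Pow (topspace X)"
    using openin_subset by blast
  then have "finite {U. openin X U \<and> x \<in> U}"
    using assms(1) finite_subset by blast
  moreover have "topspace X \<in> {U. openin X U \<and> x \<in> U}" using assms by auto
  ultimately show ?thesis unfolding minimal_open_def
    by (intro openin_Inter) blast+
qed

lemma mo_in: "x \<in> minimal_open X x"
  unfolding minimal_open_def by auto

lemma mo_least: "openin X U \<Longrightarrow> x \<in> U \<Longrightarrow> minimal_open X x \<subseteq> U"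
  unfolding minimal_open_def by auto

lemma mo_sub: "x \<in> topspace X \<Longrightarrow> minimal_open X x \<subseteq> topspace X"
  by (rule mo_least) auto

lemma le_iff:
  assumes "finite (topspace X)" "y \<in> topspace X"
  shows "fin_le X x y \<longleftrightarrow> x \<in> minimal_open X y"
proof
  assume "fin_le X x y" then show "x \<in> minimal_open X y"
    using mo_in[of x X] unfolding fin_le_def by blast
next
  assume "x \<in> minimal_open X y" then show "fin_le X x y"
    unfolding fin_le_def by (rule mo_least[OF mo_open[OF assms]])
qed

lemma fle_refl: "fin_le X x x" unfolding fin_le_def by auto

lemma fle_trans: "fin_le X x y \<Longrightarrow> fin_le X y z \<Longrightarrow> fin_le X x z"
  unfolding fin_le_def by auto

lemma le_antisym:
  assumes "finite_T0_space X" "x \<in> topspace X" "y \<in> topspace X" "fin_le X x y" "fin_le X y x"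
  shows "x = y"
proof (rule ccontr)
  assume "x \<noteq> y"
  then obtain U where U: "openin X U" "x \<notin> U \<longleftrightarrow> y \<in> U"
    using assms(1-3) unfolding finite_T0_space_def t0_space_def by blast
  have "minimal_open X x = minimal_open X y" using assms(4,5) unfolding fin_le_def by auto
  then show False
  proof (cases "x \<in> U")
    case True
    then have "minimal_open X x \<subseteq> U" by (rule mo_least[OF U(1)])
    then show False using U True mo_in[of y X] \<open>minimal_open X x = minimal_open X y\<close> by auto
  next
    case False
    then have "y \<in> U" using U by auto
    then have "minimal_open X y \<subseteq> U" by (rule mo_least[OF U(1)])
    then show False using U False mo_in[of x X] \<open>minimal_open X x = minimal_open X y\<close> by auto
  qed
qed

lemma open_down:
  assumes "finite (topspace X)" "openin X U" "x \<in> U" "y \<in> topspace X" "fin_le X y x"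
  shows "y \<in> U"
proof -
  have "x \<in> topspace X" using assms openin_subset by blast
  then have "y \<in> minimal_open X x" using le_iff[OF assms(1) \<open>x \<in> topspace X\<close>] assms(5) by simp
  then show ?thesis using mo_least[OF assms(2,3)] by blast
qed

lemma cont_mono:
  assumes "finite (topspace X)" "finite (topspace Y)" "continuous_map X Y f"
    "x \<in> topspace X" "y \<in> topspace X" "fin_le X x y"
  shows "fin_le Y (f x) (f y)"
proof -
  have fy: "f y \<in> topspace Y" using continuous_map_image_subset_topspace[OF assms(3)] assms(5) by blast
  have "openin X {z \<in> topspace X. f z \<in> minimal_open Y (f y)}"
    using assms(3) mo_open[OF assms(2) fy] unfolding continuous_map_def by blast
  moreover have "y \<in> {z \<in> topspace X. f z \<in> minimal_open Y (f y)}"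
    using mo_in[of "f y" Y] assms(5) by blast
  ultimately have "x \<in> {z \<in> topspace X. f z \<in> minimal_open Y (f y)}"
    by (rule open_down[OF assms(1) _ _ assms(4,6)])
  then have "f x \<in> minimal_open Y (f y)" by blast
  then show ?thesis using le_iff[OF assms(2) fy] by simp
qed

lemma mono_cont:
  assumes "finite (topspace X)" "finite (topspace Y)" "\<And>x. x \<in> topspace X \<Longrightarrow> f x \<in> topspace Y"
    "\<And>x y. x \<in> topspace X \<Longrightarrow> y \<in> topspace X \<Longrightarrow> fin_le X x y \<Longrightarrow> fin_le Y (f x) (f y)"
  shows "continuous_map X Y f"
proof -
  have A: "f \<in> topspace X \<rightarrow> topspace Y" using assms(3) by (simp add: Pi_iff)
  have B: "openin X {x \<in> topspace X. f x \<in> U}" if U: "openin Y U" for U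
  proof -
    have "\<exists>T. openin X T \<and> x \<in> T \<and> T \<subseteq> {x \<in> topspace X. f x \<in> U}"
      if x: "x \<in> {x \<in> topspace X. f x \<in> U}" for x
    proof -
      have xt: "x \<in> topspace X" using x by blast
      have fx: "f x \<in> U" using x by blast
      have O: "openin X (minimal_open X x)" using mo_open[OF assms(1) xt] .
      have S: "minimal_open X x \<subseteq> {x \<in> topspace X. f x \<in> U}"
      proof
        fix y assume y: "y \<in> minimal_open X x"
        have yt: "y \<in> topspace X" using mo_sub[OF xt] y by blast
        have "fin_le X y x" using le_iff[OF assms(1) xt] y by simp
        then have "fin_le Y (f y) (f x)" using assms(4)[OF yt xt] by simp
        then have "f y \<in> U" using open_down[OF assms(2) U fx assms(3)[OF yt]] by simp
        then show "y \<in> {x \<in> topspace X. f x \<in> U}" using yt by simp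
      qed
      show ?thesis using O S mo_in[of x X] by blast
    qed
    then show ?thesis by (subst openin_subopen) simp
  qed
  show ?thesis unfolding continuous_map_def using A B by simp
qed


lemma lt_card:
  assumes "finite_T0_space X" "x \<in> topspace X" "y \<in> topspace X" "fin_le X y x" "y \<noteq> x"
  shows "card (minimal_open X y) < card (minimal_open X x)"
proof -
  have fin: "finite (topspace X)" using assms(1) unfolding finite_T0_space_def by simp
  have sub: "minimal_open X y \<subseteq> minimal_open X x" using assms(4) unfolding fin_le_def .
  have "minimal_open X y \<noteq> minimal_open X x"
  proof
    assume "minimal_open X y = minimal_open X x"
    then have "fin_le X x y" unfolding fin_le_def by simp
    then show False using le_antisym[OF assms(1) assms(3) assms(2) assms(4)] assms(5) by simp
  qed
  then have "minimal_open X y \<subset> minimal_open X x" using sub by blast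
  moreover have "finite (minimal_open X x)" using mo_sub[OF assms(2)] fin finite_subset by blast
  ultimately show ?thesis by (rule psubset_card_mono[rotated])
qed

lemma card_mo_le:
  assumes "finite (topspace X)" "x \<in> topspace X"
  shows "card (minimal_open X x) \<le> card (topspace X)"
  using card_mono[OF assms(1) mo_sub[OF assms(2)]] .

lemma minimal_below_id:
  assumes min: "minimal_finite_space X"
    and maps: "\<And>x. x \<in> topspace X \<Longrightarrow> \<phi> x \<in> topspace X"
    and mono: "\<And>x y. x \<in> topspace X \<Longrightarrow> y \<in> topspace X \<Longrightarrow> fin_le X x y \<Longrightarrow> fin_le X (\<phi> x) (\<phi> y)"
    and below: "\<And>x. x \<in> topspace X \<Longrightarrow> fin_le X (\<phi> x) x"
    and x0: "x0 \<in> topspace X"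
  shows "\<phi> x0 = x0"
proof (rule ccontr)
  assume x0n: "\<phi> x0 \<noteq> x0"
  have T0: "finite_T0_space X" using min unfolding minimal_finite_space_def by simp
  let ?P = "\<lambda>x. x \<in> topspace X \<and> \<phi> x \<noteq> x"
  obtain x where P: "?P x" and least: "\<And>y. ?P y \<Longrightarrow> card (minimal_open X x) \<le> card (minimal_open X y)"
    using ex_has_least_nat[of ?P x0 "\<lambda>x. card (minimal_open X x)"] x0 x0n by blast
  have xt: "x \<in> topspace X" using P by simp
  have fix_below: "\<phi> y = y" if "y \<in> topspace X" "fin_lt X y x" for y
  proof (rule ccontr)
    assume "\<phi> y \<noteq> y"
    then have "card (minimal_open X x) \<le> card (minimal_open X y)" using least that(1) by simp
    moreover have "card (minimal_open X y) < card (minimal_open X x)"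
      using lt_card[OF T0 xt that(1)] that(2) unfolding fin_lt_def by simp
    ultimately show False by simp
  qed
  have "beat_point X x"
    unfolding beat_point_def
  proof (intro conjI disjI1 bexI[of _ "\<phi> x"] ballI impI)
    show "x \<in> topspace X" by (rule xt)
    show "\<phi> x \<in> topspace X" by (rule maps[OF xt])
    show "fin_lt X (\<phi> x) x" unfolding fin_lt_def using below[OF xt] P by simp
    fix y assume y: "y \<in> topspace X" "fin_lt X y x"
    have "fin_le X (\<phi> y) (\<phi> x)" using mono[OF y(1) xt] y(2) unfolding fin_lt_def by simp
    then show "fin_le X y (\<phi> x)" using fix_below[OF y] by simp
  qed
  then show False using min xt unfolding minimal_finite_space_def by simp
qed

lemma minimal_above_id:
  assumes min: "minimal_finite_space X"
    and maps: "\<And>x. x \<in> topspace X \<Longrightarrow> \<phi> x \<in> topspace X"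
    and mono: "\<And>x y. x \<in> topspace X \<Longrightarrow> y \<in> topspace X \<Longrightarrow> fin_le X x y \<Longrightarrow> fin_le X (\<phi> x) (\<phi> y)"
    and above: "\<And>x. x \<in> topspace X \<Longrightarrow> fin_le X x (\<phi> x)"
    and x0: "x0 \<in> topspace X"
  shows "\<phi> x0 = x0"
proof (rule ccontr)
  assume x0n: "\<phi> x0 \<noteq> x0"
  have T0: "finite_T0_space X" using min unfolding minimal_finite_space_def by simp
  have fin: "finite (topspace X)" using T0 unfolding finite_T0_space_def by simp
  let ?P = "\<lambda>x. x \<in> topspace X \<and> \<phi> x \<noteq> x"
  let ?m = "\<lambda>x. card (topspace X) - card (minimal_open X x)"
  obtain x where P: "?P x" and least: "\<And>y. ?P y \<Longrightarrow> ?m x \<le> ?m y"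
    using ex_has_least_nat[of ?P x0 ?m] x0 x0n by blast
  have xt: "x \<in> topspace X" using P by simp
  have fix_above: "\<phi> y = y" if "y \<in> topspace X" "fin_lt X x y" for y
  proof (rule ccontr)
    assume "\<phi> y \<noteq> y"
    then have "?m x \<le> ?m y" using least that(1) by simp
    moreover have "card (minimal_open X x) < card (minimal_open X y)"
      using lt_card[OF T0 that(1) xt] that(2) unfolding fin_lt_def by simp
    moreover have "card (minimal_open X y) \<le> card (topspace X)" using card_mo_le[OF fin that(1)] .
    ultimately show False by simp
  qed
  have "beat_point X x"
    unfolding beat_point_def
  proof (intro conjI disjI2 bexI[of _ "\<phi> x"] ballI impI)
    show "x \<in> topspace X" by (rule xt)
    show "\<phi> x \<in> topspace X" by (rule maps[OF xt])
    show "fin_lt X x (\<phi> x)" unfolding fin_lt_def using above[OF xt] P by auto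
    fix y assume y: "y \<in> topspace X" "fin_lt X x y"
    have "fin_le X (\<phi> x) (\<phi> y)" using mono[OF xt y(1)] y(2) unfolding fin_lt_def by simp
    then show "fin_le X (\<phi> x) y" using fix_above[OF y] by simp
  qed
  then show False using min xt unfolding minimal_finite_space_def by simp
qed


lemma homotopy_id_imp_id:
  assumes min: "minimal_finite_space X"
    and hom: "homotopic_with (\<lambda>_. True) X X \<phi> id"
    and x0: "x0 \<in> topspace X"
  shows "\<phi> x0 = x0"
proof -
  have T0: "finite_T0_space X" using min unfolding minimal_finite_space_def by simp
  have fin: "finite (topspace X)" using T0 unfolding finite_T0_space_def by simp
  obtain h where hc: "continuous_map (prod_topology (top_of_set {0..1::real}) X) X h"
    and h0: "\<And>x. h (0, x) = \<phi> x" and h1: "\<And>x. h (1, x) = x"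
    using hom unfolding homotopic_with_def by auto
  let ?I = "top_of_set {0..1::real}"
  have cx: "continuous_map X X (\<lambda>x. h (t, x))" if t: "t \<in> {0..1}" for t
  proof -
    have "continuous_map X (prod_topology ?I X) (\<lambda>x. (t, x))"
      using t by (simp add: continuous_map_pairwise o_def)
    from continuous_map_compose[OF this hc] show ?thesis by (simp add: o_def)
  qed
  have ct: "continuous_map ?I X (\<lambda>t. h (t, x))" if x: "x \<in> topspace X" for x
  proof -
    have "continuous_map ?I (prod_topology ?I X) (\<lambda>t. (t, x))"
      using x by (simp add: continuous_map_pairwise o_def)
    from continuous_map_compose[OF this hc] show ?thesis by (simp add: o_def)
  qed
  have maps: "h (t, x) \<in> topspace X" if "t \<in> {0..1}" "x \<in> topspace X" for t x
    using continuous_map_image_subset_topspace[OF cx[OF that(1)]] that(2) by blast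
  have monot: "fin_le X (h (t, x)) (h (t, y))"
    if "t \<in> {0..1}" "x \<in> topspace X" "y \<in> topspace X" "fin_le X x y" for t x y
    using cont_mono[OF fin fin cx[OF that(1)] that(2-4)] .
  define N where "N t = \<Inter> (insert {0..1} ((\<lambda>x. {s \<in> {0..1}. h (s, x) \<in> minimal_open X (h (t, x))}) ` topspace X))" for t
  have Nopen: "openin ?I (N t)" if t: "t \<in> {0..1}" for t
    unfolding N_def
  proof (rule openin_Inter)
    show "finite (insert {0..1} ((\<lambda>x. {s \<in> {0..1}. h (s, x) \<in> minimal_open X (h (t, x))}) ` topspace X))"
      using fin by simp
    show "insert {0..1} ((\<lambda>x. {s \<in> {0..1}. h (s, x) \<in> minimal_open X (h (t, x))}) ` topspace X) \<noteq> {}"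
      by simp
    fix A assume "A \<in> insert {0..1} ((\<lambda>x. {s \<in> {0..1}. h (s, x) \<in> minimal_open X (h (t, x))}) ` topspace X)"
    then consider "A = {0..1}" | x where "x \<in> topspace X" "A = {s \<in> {0..1}. h (s, x) \<in> minimal_open X (h (t, x))}"
      by blast
    then show "openin ?I A"
    proof cases
      case 1 then show ?thesis using openin_topspace[of ?I] by simp
    next
      case 2
      have "openin X (minimal_open X (h (t, x)))" using mo_open[OF fin maps[OF t 2(1)]] .
      then show ?thesis using ct[OF 2(1)] 2(2) unfolding continuous_map_def by simp
    qed
  qed
  have Nin: "t \<in> N t" if t: "t \<in> {0..1}" for t
    unfolding N_def using t mo_in by auto
  have Nle: "s \<in> {0..1} \<and> (\<forall>x \<in> topspace X. fin_le X (h (s, x)) (h (t, x)))"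
    if t: "t \<in> {0..1}" and s: "s \<in> N t" for s t
  proof -
    have s01: "s \<in> {0..1}" using s unfolding N_def by blast
    have "h (s, x) \<in> minimal_open X (h (t, x))" if x: "x \<in> topspace X" for x
      using s x unfolding N_def by blast
    then show ?thesis using le_iff[OF fin maps[OF t]] s01 by simp
  qed
  define S where "S = {t \<in> {0..1::real}. \<forall>x \<in> topspace X. h (t, x) = x}"
  have Sopen: "openin ?I S"
  proof (subst openin_subopen, intro ballI)
    fix t assume tS: "t \<in> S"
    have t: "t \<in> {0..1}" using tS unfolding S_def by simp
    have "N t \<subseteq> S"
    proof
      fix s assume s: "s \<in> N t"
      have s01: "s \<in> {0..1}" and le: "\<And>x. x \<in> topspace X \<Longrightarrow> fin_le X (h (s, x)) (h (t, x))"
        using Nle[OF t s] by auto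
      have "h (s, x) = x" if x: "x \<in> topspace X" for x
      proof (rule minimal_below_id[OF min, of "\<lambda>x. h (s, x)"])
        show "\<And>x. x \<in> topspace X \<Longrightarrow> h (s, x) \<in> topspace X" using maps[OF s01] .
        show "\<And>x y. x \<in> topspace X \<Longrightarrow> y \<in> topspace X \<Longrightarrow> fin_le X x y \<Longrightarrow> fin_le X (h (s, x)) (h (s, y))"
          using monot[OF s01] .
        show "\<And>x. x \<in> topspace X \<Longrightarrow> fin_le X (h (s, x)) x" using le tS unfolding S_def by auto
        show "x \<in> topspace X" by (rule x)
      qed
      then show "s \<in> S" unfolding S_def using s01 by simp
    qed
    then show "\<exists>T. openin ?I T \<and> t \<in> T \<and> T \<subseteq> S" using Nopen[OF t] Nin[OF t] by blast
  qed
  have Copen: "openin ?I ({0..1} - S)"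
  proof (subst openin_subopen, intro ballI)
    fix t assume tS: "t \<in> {0..1} - S"
    have t: "t \<in> {0..1}" using tS by simp
    have "N t \<subseteq> {0..1} - S"
    proof
      fix s assume s: "s \<in> N t"
      have s01: "s \<in> {0..1}" and le: "\<And>x. x \<in> topspace X \<Longrightarrow> fin_le X (h (s, x)) (h (t, x))"
        using Nle[OF t s] by auto
      show "s \<in> {0..1} - S"
      proof (rule ccontr)
        assume "s \<notin> {0..1} - S"
        then have sS: "\<And>x. x \<in> topspace X \<Longrightarrow> h (s, x) = x" using s01 unfolding S_def by simp
        have "h (t, x) = x" if x: "x \<in> topspace X" for x
        proof (rule minimal_above_id[OF min, of "\<lambda>x. h (t, x)"])
          show "\<And>x. x \<in> topspace X \<Longrightarrow> h (t, x) \<in> topspace X" using maps[OF t] .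
          show "\<And>x y. x \<in> topspace X \<Longrightarrow> y \<in> topspace X \<Longrightarrow> fin_le X x y \<Longrightarrow> fin_le X (h (t, x)) (h (t, y))"
            using monot[OF t] .
          show "\<And>x. x \<in> topspace X \<Longrightarrow> fin_le X x (h (t, x))" using le sS by metis
          show "x \<in> topspace X" by (rule x)
        qed
        then have "t \<in> S" unfolding S_def using t by simp
        then show False using tS by simp
      qed
    qed
    then show "\<exists>T. openin ?I T \<and> t \<in> T \<and> T \<subseteq> {0..1} - S" using Nopen[OF t] Nin[OF t] by blast
  qed
  have conn: "connected_space ?I" by (simp add: is_interval_cc)
  have "1 \<in> S" unfolding S_def using h1 by simp
  moreover have "closedin ?I S" using Copen unfolding closedin_def S_def by auto
  ultimately have "S = {0..1}" using conn Sopen unfolding connected_space_clopen_in by auto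
  then have "0 \<in> S" by simp
  then show ?thesis using x0 h0 unfolding S_def by simp
qed


lemma assoc_carrier: "assoc_matrix X f \<in> carrier_mat (card (topspace X)) (card (topspace X))"
  unfolding assoc_matrix_def by simp

lemma assoc_index: "i < card (topspace X) \<Longrightarrow> j < card (topspace X) \<Longrightarrow>
   assoc_matrix X f $$ (i, j) = (if fin_le X (f i) (f j) then 0 else 1)"
  unfolding assoc_matrix_def by simp

lemma det_perm_both:
  fixes A :: "'a :: comm_ring_1 mat"
  assumes A: "A \<in> carrier_mat n n" and p: "p permutes {0..<n}"
  shows "det (mat n n (\<lambda>(i, j). A $$ (p i, p j))) = det A"
proof -
  let ?B = "mat n n (\<lambda>(i, j). A $$ (p i, j))"
  let ?D = "mat n n (\<lambda>(i, j). transpose_mat ?B $$ (p i, j))"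
  have pn: "\<And>i. i < n \<Longrightarrow> p i < n" using p by (simp add: permutes_in_image)
  have eq: "mat n n (\<lambda>(i, j). A $$ (p i, p j)) = transpose_mat ?D"
    by (rule eq_matI) (auto simp: pn)
  have "det (transpose_mat ?D) = det ?D" by (rule det_transpose[of _ n]) simp
  also have "\<dots> = signof p * det (transpose_mat ?B)" by (rule det_permute_rows[OF _ p]) simp
  also have "det (transpose_mat ?B) = det ?B" by (rule det_transpose[of _ n]) simp
  also have "det ?B = signof p * det A" by (rule det_permute_rows[OF A p])
  finally have "det (mat n n (\<lambda>(i, j). A $$ (p i, p j))) = (signof p * signof p) * det A"
    unfolding eq by (simp add: ac_simps)
  also have "signof p * signof p = (1 :: 'a)" by (simp add: sign_def)
  finally show ?thesis by simp
qed

lemma det_labelling_indep: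
  assumes f: "labelling X f" and g: "labelling X g"
  shows "det (assoc_matrix X f) = det (assoc_matrix X g)"
proof -
  let ?n = "card (topspace X)"
  have bf: "bij_betw f {..<?n} (topspace X)" and bg: "bij_betw g {..<?n} (topspace X)"
    using f g unfolding labelling_def by auto
  define p where "p i = (if i < ?n then inv_into {..<?n} f (g i) else i)" for i
  have bi: "bij_betw (inv_into {..<?n} f) (topspace X) {..<?n}" by (rule bij_betw_inv_into[OF bf])
  have "bij_betw (inv_into {..<?n} f \<circ> g) {..<?n} {..<?n}" by (rule bij_betw_trans[OF bg bi])
  then have "bij_betw p {..<?n} {..<?n}"
    by (rule bij_betw_cong[THEN iffD1, rotated]) (simp add: p_def)
  then have pp: "p permutes {0..<?n}"
    by (intro bij_imp_permutes) (auto simp: p_def atLeast0LessThan)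
  have gp: "g i = f (p i)" if "i < ?n" for i
  proof -
    have "g i \<in> topspace X" using bg that bij_betwE by blast
    then have "g i \<in> f ` {..<?n}" using bf by (simp add: bij_betw_def)
    then show ?thesis using that by (simp add: p_def f_inv_into_f)
  qed
  have pn: "\<And>i. i < ?n \<Longrightarrow> p i < ?n" using pp by (simp add: permutes_in_image)
  have "assoc_matrix X g = mat ?n ?n (\<lambda>(i, j). assoc_matrix X f $$ (p i, p j))"
    by (rule eq_matI) (auto simp: assoc_index pn gp assoc_matrix_def)
  then show ?thesis using det_perm_both[OF assoc_carrier pp] by simp
qed

lemma minimal_equiv_det:
  assumes mX: "minimal_finite_space X" and mY: "minimal_finite_space Y"
    and he: "X homotopy_equivalent_space Y"
    and f: "labelling X f" and g: "labelling Y g"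
  shows "det (assoc_matrix X f) = det (assoc_matrix Y g)"
proof -
  have finX: "finite (topspace X)" and finY: "finite (topspace Y)"
    using mX mY unfolding minimal_finite_space_def finite_T0_space_def by auto
  obtain \<phi> \<psi> where c1: "continuous_map X Y \<phi>" and c2: "continuous_map Y X \<psi>"
    and h1: "homotopic_with (\<lambda>x. True) X X (\<psi> \<circ> \<phi>) id"
    and h2: "homotopic_with (\<lambda>x. True) Y Y (\<phi> \<circ> \<psi>) id"
    using he unfolding homotopy_equivalent_space_def by blast
  have i1: "\<psi> (\<phi> x) = x" if "x \<in> topspace X" for x
    using homotopy_id_imp_id[OF mX h1 that] by simp
  have i2: "\<phi> (\<psi> y) = y" if "y \<in> topspace Y" for y
    using homotopy_id_imp_id[OF mY h2 that] by simp
  have m1: "\<phi> ` topspace X \<subseteq> topspace Y" using continuous_map_image_subset_topspace[OF c1] .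
  have m2: "\<psi> ` topspace Y \<subseteq> topspace X" using continuous_map_image_subset_topspace[OF c2] .
  have bij: "bij_betw \<phi> (topspace X) (topspace Y)"
    by (rule bij_betw_byWitness[of _ \<psi>]) (use i1 i2 m1 m2 in auto)
  have card: "card (topspace Y) = card (topspace X)" using bij_betw_same_card[OF bij] by simp
  have bf: "bij_betw f {..<card (topspace X)} (topspace X)" using f unfolding labelling_def .
  have lab: "labelling Y (\<phi> \<circ> f)" unfolding labelling_def card
    by (rule bij_betw_trans[OF bf bij])
  have ft: "f i \<in> topspace X" if "i < card (topspace X)" for i
    using bf that bij_betwE by blast
  have ord: "fin_le Y (\<phi> a) (\<phi> b) \<longleftrightarrow> fin_le X a b" if "a \<in> topspace X" "b \<in> topspace X" for a b
  proof
    assume "fin_le X a b" then show "fin_le Y (\<phi> a) (\<phi> b)" using cont_mono[OF finX finY c1 that] by simp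
  next
    assume "fin_le Y (\<phi> a) (\<phi> b)"
    then have "fin_le X (\<psi> (\<phi> a)) (\<psi> (\<phi> b))" using cont_mono[OF finY finX c2] that m1 by blast
    then show "fin_le X a b" using i1 that by simp
  qed
  have "assoc_matrix Y (\<phi> \<circ> f) = assoc_matrix X f"
    by (rule eq_matI) (auto simp: assoc_matrix_def card ord ft)
  then show ?thesis using det_labelling_indep[OF lab g] by simp
qed


lemma mo_sub_top:
  assumes fin: "finite (topspace X)" and S: "S \<subseteq> topspace X" and y: "y \<in> S"
  shows "minimal_open (subtopology X S) y = minimal_open X y \<inter> S"
proof
  have yt: "y \<in> topspace X" using S y by blast
  have O: "openin (subtopology X S) (minimal_open X y \<inter> S)"
    unfolding openin_subtopology using mo_open[OF fin yt] by blast
  have "y \<in> minimal_open X y \<inter> S" using mo_in[of y X] y by simp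
  then show "minimal_open (subtopology X S) y \<subseteq> minimal_open X y \<inter> S"
    by (rule mo_least[OF O])
next
  show "minimal_open X y \<inter> S \<subseteq> minimal_open (subtopology X S) y"
  proof
    fix z assume z: "z \<in> minimal_open X y \<inter> S"
    show "z \<in> minimal_open (subtopology X S) y"
      unfolding minimal_open_def
    proof (rule InterI)
      fix U assume "U \<in> {U. openin (subtopology X S) U \<and> y \<in> U}"
      then have U: "openin (subtopology X S) U" "y \<in> U" by auto
      then obtain T where T: "openin X T" "U = T \<inter> S" unfolding openin_subtopology by blast
      have "y \<in> T" using U T by simp
      then have "minimal_open X y \<subseteq> T" by (rule mo_least[OF T(1)])
      then show "z \<in> U" using z T(2) by blast
    qed
  qed
qed

lemma le_sub:
  assumes fin: "finite (topspace X)" and S: "S \<subseteq> topspace X" and a: "a \<in> S" and b: "b \<in> S"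
  shows "fin_le (subtopology X S) a b \<longleftrightarrow> fin_le X a b"
proof -
  have fin': "finite (topspace (subtopology X S))" using fin by simp
  have bt': "b \<in> topspace (subtopology X S)" using S b by auto
  have bt: "b \<in> topspace X" using S b by auto
  show ?thesis
    unfolding le_iff[OF fin' bt'] le_iff[OF fin bt] mo_sub_top[OF fin S b] using a by simp
qed

lemma comparable_homotopic:
  assumes finX: "finite (topspace X)" and finY: "finite (topspace Y)"
    and cf: "continuous_map X Y f" and cg: "continuous_map X Y g"
    and le: "\<And>x. x \<in> topspace X \<Longrightarrow> fin_le Y (f x) (g x)"
  shows "homotopic_with (\<lambda>_. True) X Y f g"
proof -
  let ?I = "top_of_set {0..1::real}"
  define H where "H = (\<lambda>(t::real, x). if t < 1 then f x else g x)"
  have fm: "f x \<in> topspace Y" if "x \<in> topspace X" for x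
    using continuous_map_image_subset_topspace[OF cf] that by blast
  have gm: "g x \<in> topspace Y" if "x \<in> topspace X" for x
    using continuous_map_image_subset_topspace[OF cg] that by blast
  have A: "H \<in> topspace (prod_topology ?I X) \<rightarrow> topspace Y"
    using fm gm by (auto simp: H_def)
  have B: "openin (prod_topology ?I X) {p \<in> topspace (prod_topology ?I X). H p \<in> U}"
    if U: "openin Y U" for U
  proof -
    let ?P = "{p \<in> topspace (prod_topology ?I X). H p \<in> U}"
    have "\<exists>T. openin (prod_topology ?I X) T \<and> p \<in> T \<and> T \<subseteq> ?P" if p: "p \<in> ?P" for p
    proof -
      obtain t x where ptx: "p = (t, x)" by (cases p)
      have t: "t \<in> {0..1}" and xt: "x \<in> topspace X" and HU: "H (t, x) \<in> U"
        using p ptx by auto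
      have mox: "openin X (minimal_open X x)" by (rule mo_open[OF finX xt])
      have below: "y \<in> topspace X \<and> fin_le X y x" if "y \<in> minimal_open X x" for y
      proof
        show "y \<in> topspace X" using that mo_sub[OF xt] by blast
        show "fin_le X y x" using that le_iff[OF finX xt] by simp
      qed
      show ?thesis
      proof (cases "g x \<in> U")
        case True
        let ?T = "{0..1::real} \<times> minimal_open X x"
        have "openin (prod_topology ?I X) ?T"
          using mox by (simp add: openin_prod_Times_iff)
        moreover have "p \<in> ?T" using ptx t mo_in by auto
        moreover have "?T \<subseteq> ?P"
        proof
          fix q assume "q \<in> ?T"
          then obtain s y where q: "q = (s, y)" "s \<in> {0..1}" "y \<in> minimal_open X x"
            by auto
          have yt: "y \<in> topspace X" and yx: "fin_le X y x" using below[OF q(3)] by auto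
          have "g y \<in> U" using open_down[OF finY U True gm[OF yt]] cont_mono[OF finX finY cg yt xt yx] by simp
          moreover have "f y \<in> U" using open_down[OF finY U \<open>g y \<in> U\<close> fm[OF yt] le[OF yt]] .
          ultimately show "q \<in> ?P" using q yt by (auto simp: H_def)
        qed
        ultimately show ?thesis by blast
      next
        case False
        then have t1: "t < 1" and fU: "f x \<in> U" using HU by (auto simp: H_def split: if_splits)
        let ?T = "({0..1::real} \<inter> {..<1}) \<times> minimal_open X x"
        have "openin ?I ({0..1::real} \<inter> {..<1})" by (rule openin_open_Int) simp
        then have "openin (prod_topology ?I X) ?T"
          using mox by (simp add: openin_prod_Times_iff)
        moreover have "p \<in> ?T" using ptx t t1 mo_in by auto
        moreover have "?T \<subseteq> ?P"
        proof
          fix q assume "q \<in> ?T"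
          then obtain s y where q: "q = (s, y)" "s \<in> {0..1}" "s < 1" "y \<in> minimal_open X x"
            by auto
          have yt: "y \<in> topspace X" and yx: "fin_le X y x" using below[OF q(4)] by auto
          have "f y \<in> U" using open_down[OF finY U fU fm[OF yt]] cont_mono[OF finX finY cf yt xt yx] by simp
          then show "q \<in> ?P" using q yt by (auto simp: H_def)
        qed
        ultimately show ?thesis by blast
      qed
    qed
    then show ?thesis by (subst openin_subopen) simp
  qed
  have "continuous_map (prod_topology ?I X) Y H" unfolding continuous_map_def using A B by blast
  then show ?thesis unfolding homotopic_with_def
    by (intro exI[of _ H]) (auto simp: H_def)
qed


lemma beat_data:
  assumes T0: "finite_T0_space X" and bp: "beat_point X x"
  obtains m where "x \<in> topspace X" "m \<in> topspace X" "m \<noteq> x"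
    "fin_lt X m x" "\<And>y. y \<in> topspace X \<Longrightarrow> fin_lt X y x \<Longrightarrow> fin_le X y m"
  | m where "x \<in> topspace X" "m \<in> topspace X" "m \<noteq> x"
    "fin_lt X x m" "\<And>y. y \<in> topspace X \<Longrightarrow> fin_lt X x y \<Longrightarrow> fin_le X m y"
  using bp unfolding beat_point_def fin_lt_def by blast

lemma beat_equiv:
  assumes T0: "finite_T0_space X" and bp: "beat_point X x"
  shows "X homotopy_equivalent_space subtopology X (topspace X - {x})"
proof -
  let ?S = "topspace X - {x}"
  let ?X' = "subtopology X ?S"
  have fin: "finite (topspace X)" using T0 unfolding finite_T0_space_def by simp
  have fin': "finite (topspace ?X')" using fin by simp
  have tX': "topspace ?X' = ?S" by auto
  obtain m where xt: "x \<in> topspace X" and mt: "m \<in> topspace X" and mx: "m \<noteq> x"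
    and cases: "((\<forall>y \<in> topspace X. fin_lt X y x \<longrightarrow> fin_le X y m) \<and> fin_le X m x)
       \<or> ((\<forall>y \<in> topspace X. fin_lt X x y \<longrightarrow> fin_le X m y) \<and> fin_le X x m)"
    using beat_data[OF T0 bp] unfolding fin_lt_def by metis
  define r where "r z = (if z = x then m else z)" for z
  have rmaps: "r z \<in> ?S" if "z \<in> topspace X" for z
    using that mt mx by (auto simp: r_def)
  have rmono: "fin_le X (r z) (r w)" if zw: "z \<in> topspace X" "w \<in> topspace X" "fin_le X z w" for z w
    using cases
  proof
    assume D: "(\<forall>y \<in> topspace X. fin_lt X y x \<longrightarrow> fin_le X y m) \<and> fin_le X m x"
    show ?thesis
    proof (cases "z = x")
      case True
      then show ?thesis using D zw fle_trans[of X m x w] fle_refl[of X m]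
        by (cases "w = x") (auto simp: r_def)
    next
      case False
      then show ?thesis using D zw by (cases "w = x") (auto simp: r_def fin_lt_def)
    qed
  next
    assume U: "(\<forall>y \<in> topspace X. fin_lt X x y \<longrightarrow> fin_le X m y) \<and> fin_le X x m"
    show ?thesis
    proof (cases "z = x")
      case True
      then show ?thesis using U zw fle_refl[of X m] by (cases "w = x") (auto simp: r_def fin_lt_def)
    next
      case False
      then show ?thesis using U zw fle_trans[of X z x m] by (cases "w = x") (auto simp: r_def)
    qed
  qed
  have rc: "continuous_map X ?X' r"
  proof (rule mono_cont[OF fin fin'])
    show "\<And>z. z \<in> topspace X \<Longrightarrow> r z \<in> topspace ?X'" using rmaps tX' by simp
    fix z w assume zw: "z \<in> topspace X" "w \<in> topspace X" "fin_le X z w"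
    show "fin_le ?X' (r z) (r w)"
      using le_sub[OF fin _ rmaps[OF zw(1)] rmaps[OF zw(2)]] rmono[OF zw] by simp
  qed
  have ic: "continuous_map ?X' X id" by (rule continuous_map_from_subtopology[OF continuous_map_id])
  have h1: "homotopic_with (\<lambda>_. True) ?X' ?X' (r \<circ> id) id"
  proof (rule homotopic_with_equal)
    show "continuous_map ?X' ?X' (r \<circ> id)" using continuous_map_from_subtopology[OF rc] by simp
    show "\<And>z. z \<in> topspace ?X' \<Longrightarrow> (r \<circ> id) z = id z" by (auto simp: r_def)
  qed auto
  have ric: "continuous_map X X (id \<circ> r)" by (rule continuous_map_compose[OF rc ic])
  have h2: "homotopic_with (\<lambda>_. True) X X (id \<circ> r) id"
    using cases
  proof
    assume D: "(\<forall>y \<in> topspace X. fin_lt X y x \<longrightarrow> fin_le X y m) \<and> fin_le X m x"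
    show ?thesis
    proof (rule comparable_homotopic[OF fin fin ric continuous_map_id])
      fix z assume "z \<in> topspace X"
      then show "fin_le X ((id \<circ> r) z) (id z)" using D fle_refl[of X z] by (auto simp: r_def)
    qed
  next
    assume U: "(\<forall>y \<in> topspace X. fin_lt X x y \<longrightarrow> fin_le X m y) \<and> fin_le X x m"
    have "homotopic_with (\<lambda>_. True) X X id (id \<circ> r)"
    proof (rule comparable_homotopic[OF fin fin continuous_map_id ric])
      fix z assume "z \<in> topspace X"
      then show "fin_le X (id z) ((id \<circ> r) z)" using U fle_refl[of X z] by (auto simp: r_def)
    qed
    then show ?thesis by (simp add: homotopic_with_sym)
  qed
  show ?thesis unfolding homotopy_equivalent_space_def
    using rc ic h1 h2 by blast
qed


lemma neg1_pow_double: "(-1 :: int) ^ (N + N) = 1"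
  by (simp add: neg_one_even_power)

lemma beat_det:
  assumes T0: "finite_T0_space X" and bp: "beat_point X x"
  shows "\<exists>f0 f1. labelling X f0 \<and> labelling (subtopology X (topspace X - {x})) f1 \<and>
     det (assoc_matrix X f0) = - det (assoc_matrix (subtopology X (topspace X - {x})) f1)"
proof -
  let ?S = "topspace X - {x}"
  let ?X' = "subtopology X ?S"
  have fin: "finite (topspace X)" using T0 unfolding finite_T0_space_def by simp
  have tX': "topspace ?X' = ?S" by auto
  obtain m where xt: "x \<in> topspace X" and mt: "m \<in> topspace X" and mx: "m \<noteq> x"
    and cases: "((\<forall>y \<in> topspace X. fin_lt X y x \<longrightarrow> fin_le X y m) \<and> fin_le X m x)
       \<or> ((\<forall>y \<in> topspace X. fin_lt X x y \<longrightarrow> fin_le X m y) \<and> fin_le X x m)"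
    using beat_data[OF T0 bp] unfolding fin_lt_def by metis
  define N where "N = card ?S"
  have finS: "finite ?S" using fin by simp
  have cpos: "card (topspace X) > 0" using xt fin card_gt_0_iff by blast
  have n: "card (topspace X) = Suc N"
    unfolding N_def using xt fin cpos by (simp add: card_Diff_singleton)
  have cX': "card (topspace ?X') = N" unfolding tX' N_def ..
  obtain f1 where b1: "bij_betw f1 {0..<N} ?S" using ex_bij_betw_nat_finite[OF finS] unfolding N_def by blast
  then have b1': "bij_betw f1 {..<N} ?S" by (simp add: atLeast0LessThan)
  define f0 where "f0 = f1(N := x)"
  have f0i: "f0 i = f1 i" if "i < N" for i using that by (simp add: f0_def)
  have f0N: "f0 N = x" by (simp add: f0_def)
  have lab1: "labelling ?X' f1" unfolding labelling_def cX' unfolding tX' by (rule b1')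
  have b0a: "bij_betw f0 {..<N} ?S" using b1' by (rule bij_betw_cong[THEN iffD1, rotated]) (simp add: f0i)
  have b0b: "bij_betw f0 {N} {x}" by (simp add: f0N)
  have "bij_betw f0 ({..<N} \<union> {N}) (?S \<union> {x})"
    by (rule bij_betw_combine[OF b0a b0b]) simp
  moreover have "{..<N} \<union> {N} = {..<Suc N}" by auto
  moreover have "?S \<union> {x} = topspace X" using xt by auto
  ultimately have lab0: "labelling X f0" unfolding labelling_def n by simp
  have f1S: "f1 i \<in> ?S" if "i < N" for i using b1' that bij_betwE by blast
  obtain k where k: "k < N" "f1 k = m"
  proof -
    have "m \<in> f1 ` {..<N}" using b1' mt mx by (simp add: bij_betw_def)
    then show ?thesis using that by blast
  qed
  let ?A = "assoc_matrix X f0"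
  let ?n = "Suc N"
  have A: "?A \<in> carrier_mat ?n ?n" using assoc_carrier[of X f0] unfolding n .
  have Aij: "?A $$ (i, j) = (if fin_le X (f0 i) (f0 j) then 0 else 1)" if "i < ?n" "j < ?n" for i j
    using assoc_index[of i X j f0] that unfolding n by simp
  have minor: "mat_delete B N N = assoc_matrix ?X' f1"
    if B: "B \<in> carrier_mat ?n ?n" and BA: "\<And>i j. i < N \<Longrightarrow> j < N \<Longrightarrow> B $$ (i, j) = ?A $$ (i, j)" for B
  proof (rule eq_matI)
    show "dim_row (mat_delete B N N) = dim_row (assoc_matrix ?X' f1)" using B cX' by (simp add: assoc_matrix_def)
    show "dim_col (mat_delete B N N) = dim_col (assoc_matrix ?X' f1)" using B cX' by (simp add: assoc_matrix_def)
    fix i j assume "i < dim_row (assoc_matrix ?X' f1)" "j < dim_col (assoc_matrix ?X' f1)"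
    then have ij: "i < N" "j < N" using cX' by (auto simp: assoc_matrix_def)
    have "mat_delete B N N $$ (i, j) = B $$ (i, j)" using B ij by (simp add: mat_delete_def)
    also have "\<dots> = ?A $$ (i, j)" using BA ij by simp
    also have "\<dots> = (if fin_le X (f1 i) (f1 j) then 0 else 1)" using Aij[of i j] ij by (simp add: f0i)
    also have "\<dots> = assoc_matrix ?X' f1 $$ (i, j)"
      using ij cX' le_sub[OF fin _ f1S[OF ij(1)] f1S[OF ij(2)]] by (simp add: assoc_matrix_def)
    finally show "mat_delete B N N $$ (i, j) = assoc_matrix ?X' f1 $$ (i, j)" .
  qed
  have "det ?A = - det (assoc_matrix ?X' f1)"
    using cases
  proof
    assume D: "(\<forall>y \<in> topspace X. fin_lt X y x \<longrightarrow> fin_le X y m) \<and> fin_le X m x"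
    let ?B = "addcol (-1) N k ?A"
    have B: "?B \<in> carrier_mat ?n ?n" using A by (simp add: mat_addcol_def)
    have Bij: "?B $$ (i, j) = (if j = N then - (?A $$ (i, k)) + ?A $$ (i, N) else ?A $$ (i, j))"
      if "i < ?n" "j < ?n" for i j using A that by simp
    have "det ?B = det ?A" by (rule det_addcol[OF _ _ A]) (use k in auto)
    have col0: "?B $$ (i, N) = 0" if i: "i < N" for i
    proof -
      have zS: "f1 i \<in> ?S" by (rule f1S[OF i])
      have "fin_le X (f1 i) x \<longleftrightarrow> fin_le X (f1 i) m"
        using D zS fle_trans[of X "f1 i" m x] unfolding fin_lt_def by auto
      then show ?thesis using Bij[of i N] Aij[of i k] Aij[of i N] i k by (simp add: f0i f0N)
    qed
    have xm: "\<not> fin_le X x m" using le_antisym[OF T0 mt xt] D mx by auto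
    have colN: "?B $$ (N, N) = -1"
      using Bij[of N N] Aij[of N k] Aij[of N N] k xm fle_refl[of X x] by (simp add: f0i f0N)
    have "det ?B = (\<Sum>i<?n. ?B $$ (i, N) * cofactor ?B i N)"
      by (rule laplace_expansion_column[OF B]) simp
    also have "\<dots> = (\<Sum>i<N. ?B $$ (i, N) * cofactor ?B i N) + ?B $$ (N, N) * cofactor ?B N N"
      by simp
    also have "(\<Sum>i<N. ?B $$ (i, N) * cofactor ?B i N) = 0" using col0 by simp
    also have "cofactor ?B N N = det (mat_delete ?B N N)"
      unfolding cofactor_def using neg1_pow_double[of N] by simp
    also have "mat_delete ?B N N = assoc_matrix ?X' f1"
      by (rule minor[OF B]) (use A in simp)
    finally show ?thesis using colN \<open>det ?B = det ?A\<close> by simp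
  next
    assume U: "(\<forall>y \<in> topspace X. fin_lt X x y \<longrightarrow> fin_le X m y) \<and> fin_le X x m"
    let ?B = "addrow (-1) N k ?A"
    have B: "?B \<in> carrier_mat ?n ?n" using A by simp
    have Bij: "?B $$ (i, j) = (if i = N then - (?A $$ (k, j)) + ?A $$ (N, j) else ?A $$ (i, j))"
      if "i < ?n" "j < ?n" for i j using A that by simp
    have "det ?B = det ?A" by (rule det_addrow[OF _ _ A]) (use k in auto)
    have row0: "?B $$ (N, j) = 0" if j: "j < N" for j
    proof -
      have zS: "f1 j \<in> ?S" by (rule f1S[OF j])
      have "fin_le X x (f1 j) \<longleftrightarrow> fin_le X m (f1 j)"
        using U zS fle_trans[of X x m "f1 j"] unfolding fin_lt_def by auto
      then show ?thesis using Bij[of N j] Aij[of k j] Aij[of N j] j k by (simp add: f0i f0N)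
    qed
    have mx': "\<not> fin_le X m x" using le_antisym[OF T0 xt mt] U mx by auto
    have rowN: "?B $$ (N, N) = -1"
      using Bij[of N N] Aij[of k N] Aij[of N N] k mx' fle_refl[of X x] by (simp add: f0i f0N)
    have "det ?B = (\<Sum>j<?n. ?B $$ (N, j) * cofactor ?B N j)"
      by (rule laplace_expansion_row[OF B]) simp
    also have "\<dots> = (\<Sum>j<N. ?B $$ (N, j) * cofactor ?B N j) + ?B $$ (N, N) * cofactor ?B N N"
      by simp
    also have "(\<Sum>j<N. ?B $$ (N, j) * cofactor ?B N j) = 0" using row0 by simp
    also have "cofactor ?B N N = det (mat_delete ?B N N)"
      unfolding cofactor_def using neg1_pow_double[of N] by simp
    also have "mat_delete ?B N N = assoc_matrix ?X' f1"
      by (rule minor[OF B]) (use A in simp)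
    finally show ?thesis using rowN \<open>det ?B = det ?A\<close> by simp
  qed
  then show ?thesis using lab0 lab1 by blast
qed


lemma labelling_exists:
  assumes "finite (topspace X)" shows "\<exists>f. labelling X f"
  using ex_bij_betw_nat_finite[OF assms] unfolding labelling_def by (simp add: atLeast0LessThan)

definition is_core :: "'a topology \<Rightarrow> 'a topology \<Rightarrow> bool" where
  "is_core X Z \<longleftrightarrow> minimal_finite_space Z \<and> X homotopy_equivalent_space Z
     \<and> (topspace X \<noteq> {} \<longrightarrow> topspace Z \<noteq> {})
     \<and> (\<forall>f g. labelling X f \<longrightarrow> labelling Z g \<longrightarrow> \<bar>det (assoc_matrix X f)\<bar> = \<bar>det (assoc_matrix Z g)\<bar>)"

lemma is_coreI:
  assumes "minimal_finite_space Z" "X homotopy_equivalent_space Z"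
    "topspace X \<noteq> {} \<Longrightarrow> topspace Z \<noteq> {}"
    "\<And>f g. labelling X f \<Longrightarrow> labelling Z g \<Longrightarrow> \<bar>det (assoc_matrix X f)\<bar> = \<bar>det (assoc_matrix Z g)\<bar>"
  shows "is_core X Z"
  unfolding is_core_def using assms by simp

lemma is_coreD:
  assumes "is_core X Z"
  shows "minimal_finite_space Z" "X homotopy_equivalent_space Z"
    "topspace X \<noteq> {} \<Longrightarrow> topspace Z \<noteq> {}"
    "\<And>f g. labelling X f \<Longrightarrow> labelling Z g \<Longrightarrow> \<bar>det (assoc_matrix X f)\<bar> = \<bar>det (assoc_matrix Z g)\<bar>"
  using assms unfolding is_core_def by simp_all

lemma core:
  fixes X :: "'a topology"
  shows "finite_T0_space X \<Longrightarrow> \<exists>Z. is_core X Z"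
proof (induction "card (topspace X)" arbitrary: X rule: less_induct)
  case less
  note T0 = less.prems
  have fin: "finite (topspace X)" using T0 unfolding finite_T0_space_def by simp
  show ?case
  proof (cases "minimal_finite_space X")
    case True
    have "is_core X X"
    proof (rule is_coreI)
      show "minimal_finite_space X" by (rule True)
      show "X homotopy_equivalent_space X" by (rule homotopy_equivalent_space_refl)
      show "topspace X \<noteq> {}" if "topspace X \<noteq> {}" using that .
      fix f g assume "labelling X f" "labelling X g"
      then show "\<bar>det (assoc_matrix X f)\<bar> = \<bar>det (assoc_matrix X g)\<bar>"
        using det_labelling_indep by metis
    qed
    then show ?thesis by (rule exI)
  next
    case False
    have "\<not> (\<forall>x \<in> topspace X. \<not> beat_point X x)"
      using T0 False unfolding minimal_finite_space_def by simp
    then obtain x where xt: "x \<in> topspace X" and bp: "beat_point X x"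
      by blast
    let ?X' = "subtopology X (topspace X - {x})"
    have T0': "finite_T0_space ?X'"
      using T0 t0_space_subtopology[of X] fin unfolding finite_T0_space_def by simp
    have "card (topspace X - {x}) < card (topspace X)" using card_Diff1_less[OF fin xt] .
    moreover have "topspace ?X' = topspace X - {x}" by auto
    ultimately have lt: "card (topspace ?X') < card (topspace X)" by simp
    obtain Z where Z: "is_core ?X' Z" using less.hyps[OF lt T0'] by (rule exE)
    have e: "X homotopy_equivalent_space Z"
      using homotopy_eqv_trans[OF beat_equiv[OF T0 bp] is_coreD(2)[OF Z]] .
    obtain m where m: "m \<in> topspace X" "m \<noteq> x"
      using beat_data[OF T0 bp] by metis
    then have ne: "topspace ?X' \<noteq> {}" by auto
    obtain f0 f1 where f0: "labelling X f0" and f1: "labelling ?X' f1"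
      and d: "det (assoc_matrix X f0) = - det (assoc_matrix ?X' f1)"
      using beat_det[OF T0 bp] by blast
    have "is_core X Z"
    proof (rule is_coreI)
      show "minimal_finite_space Z" by (rule is_coreD(1)[OF Z])
      show "X homotopy_equivalent_space Z" by (rule e)
      show "topspace Z \<noteq> {}" by (rule is_coreD(3)[OF Z ne])
      fix f g assume f: "labelling X f" and g: "labelling Z g"
      have "det (assoc_matrix X f) = det (assoc_matrix X f0)" by (rule det_labelling_indep[OF f f0])
      then have "\<bar>det (assoc_matrix X f)\<bar> = \<bar>det (assoc_matrix ?X' f1)\<bar>" using d by simp
      also have "\<dots> = \<bar>det (assoc_matrix Z g)\<bar>" by (rule is_coreD(4)[OF Z f1 g])
      finally show "\<bar>det (assoc_matrix X f)\<bar> = \<bar>det (assoc_matrix Z g)\<bar>" .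
    qed
    then show ?thesis by (rule exI)
  qed
qed


theorem mainTheorem4:
  fixes X :: "'a topology" and Y :: "'b topology"
    and f :: "nat \<Rightarrow> 'a" and g :: "nat \<Rightarrow> 'b"
  assumes "finite_T0_space X" and "finite_T0_space Y"
    and "labelling X f" and "labelling Y g"
  shows "(minimal_finite_space X \<and> minimal_finite_space Y \<and> X homotopy_equivalent_space Y
            \<longrightarrow> Determinant.det (assoc_matrix X f) = Determinant.det (assoc_matrix Y g))
       \<and> (X homotopy_equivalent_space Y
            \<longrightarrow> \<bar>Determinant.det (assoc_matrix X f)\<bar> = \<bar>Determinant.det (assoc_matrix Y g)\<bar>)
       \<and> (contractible_space X \<and> topspace X \<noteq> {}
            \<longrightarrow> Determinant.det (assoc_matrix X f) = 0)"
proof (intro conjI impI)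
  assume h: "minimal_finite_space X \<and> minimal_finite_space Y \<and> X homotopy_equivalent_space Y"
  show "det (assoc_matrix X f) = det (assoc_matrix Y g)"
    by (rule minimal_equiv_det[OF conjunct1[OF h] conjunct1[OF conjunct2[OF h]] conjunct2[OF conjunct2[OF h]] assms(3,4)])
next
  assume he: "X homotopy_equivalent_space Y"
  obtain ZX where ZX: "is_core X ZX" using core[OF assms(1)] by (rule exE)
  obtain ZY where ZY: "is_core Y ZY" using core[OF assms(2)] by (rule exE)
  have "finite (topspace ZX)" using is_coreD(1)[OF ZX] unfolding minimal_finite_space_def finite_T0_space_def by simp
  then obtain gx where gx: "labelling ZX gx" using labelling_exists by blast
  have "finite (topspace ZY)" using is_coreD(1)[OF ZY] unfolding minimal_finite_space_def finite_T0_space_def by simp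
  then obtain gy where gy: "labelling ZY gy" using labelling_exists by blast
  have e1: "ZX homotopy_equivalent_space X"
    using is_coreD(2)[OF ZX] homotopy_equivalent_space_sym by blast
  have "ZX homotopy_equivalent_space ZY"
    using homotopy_eqv_trans[OF homotopy_eqv_trans[OF e1 he] is_coreD(2)[OF ZY]] .
  then have "det (assoc_matrix ZX gx) = det (assoc_matrix ZY gy)"
    by (rule minimal_equiv_det[OF is_coreD(1)[OF ZX] is_coreD(1)[OF ZY] _ gx gy])
  moreover have "\<bar>det (assoc_matrix X f)\<bar> = \<bar>det (assoc_matrix ZX gx)\<bar>"
    by (rule is_coreD(4)[OF ZX assms(3) gx])
  moreover have "\<bar>det (assoc_matrix Y g)\<bar> = \<bar>det (assoc_matrix ZY gy)\<bar>"
    by (rule is_coreD(4)[OF ZY assms(4) gy])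
  ultimately show "\<bar>det (assoc_matrix X f)\<bar> = \<bar>det (assoc_matrix Y g)\<bar>"
    by simp
next
  assume c: "contractible_space X \<and> topspace X \<noteq> {}"
  obtain Z where Z: "is_core X Z" using core[OF assms(1)] by (rule exE)
  have Zm: "minimal_finite_space Z" by (rule is_coreD(1)[OF Z])
  have "contractible_space Z"
    using homotopy_equivalent_space_contractibility[OF is_coreD(2)[OF Z]] c by simp
  then obtain a where "homotopic_with (\<lambda>x. True) Z Z id (\<lambda>x. a)"
    unfolding contractible_space_def by blast
  then have ha: "homotopic_with (\<lambda>x. True) Z Z (\<lambda>x. a) id" by (rule homotopic_with_symD)
  have allA: "z = a" if "z \<in> topspace Z" for z
    using homotopy_id_imp_id[OF Zm ha that] by simp
  have "topspace Z \<noteq> {}" using is_coreD(3)[OF Z] c by simp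
  then obtain z0 where z0: "z0 \<in> topspace Z" by blast
  have "a = z0" using allA[OF z0] by simp
  then have top1: "topspace Z = {a}" using allA z0 by auto
  have "finite (topspace Z)" using Zm unfolding minimal_finite_space_def finite_T0_space_def by simp
  then obtain gz where gz: "labelling Z gz" using labelling_exists by blast
  have "assoc_matrix Z gz \<in> carrier_mat 1 1" using assoc_carrier[of Z gz] top1 by simp
  then have "det (assoc_matrix Z gz) = assoc_matrix Z gz $$ (0, 0)" by (rule det_single)
  also have "\<dots> = 0" using assoc_index[of 0 Z 0 gz] top1 fle_refl by simp
  finally show "det (assoc_matrix X f) = 0" using is_coreD(4)[OF Z assms(3) gz] by simp
qed

end
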